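(* Let $\bar t>0$, $I=(0,\bar t)$, let $\gamma_1,\gamma_2\in\mathrm{Lip}(I)$ (extended continuously to $\bar I$) with $\gamma_1<0<\gamma_2$ on $I$ and $\gamma_1(0)=\gamma_1(\bar t)=\gamma_2(0)=\gamma_2(\bar t)=0$, let $D=\{(y,t)\in\mathbb W: t\in I,\ \gamma_1(t)<y<\gamma_2(t)\}$, and let $\phi\in C(\partial D)$ with $\phi_1,\phi_2\in\mathrm{Lip}(I)$. Assume $\zeta<1$. Then there exists a bi-Lipschitz increasing function $\lambda:\bar I\to\bar I$ such that: (i) $p_2(\lambda(s))-p_1(s)\in H_{p_1(s)}$ for all $s\in\bar I$; (ii) for all $s,\lambda'\in\bar I$, if $p_2(\lambda')-p_1(s)\in H_{p_1(s)}$ then $\lambda'=\lambda(s)$; (iii) $\lambda(0)=0$ and $\lambda(\bar t)=\bar t$; (iv) $\frac{1-\zeta}{1+\zeta}\le\mathrm{Lip}(\lambda)\le\frac{1+\zeta}{1-\zeta}$ and $\frac{1-\zeta}{1+\zeta}\le\mathrm{Lip}(\lambda^{-1})\le\frac{1+\zeta}{1-\zeta}$.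
   Context: $\mathbb H$ is $\mathbb R^3$ with product $(x,y,t)\cdot(\xi,\eta,\tau)=(x+\xi,y+\eta,t+\tau+2(y\xi-x\eta))$; $X=\partial_x+2y\partial_t$, $Y=\partial_y-2x\partial_t$, and $H_p=\mathrm{span}\{X(p),Y(p)\}$ (a linear subspace of $\mathbb R^3$). $\mathbb W=\{x=0\}$ with coordinates $(y,t)$. Set $\phi_i(s)=\phi(\gamma_i(s),s)$, $\|\gamma\|_\infty=\max_i\|\gamma_i\|_\infty$, $\mathrm{Lip}(\gamma)=\max_i\mathrm{Lip}(\gamma_i)$, $\|\phi\|_\infty=\max_i\|\phi_i\|_\infty$, $\mathrm{Lip}(\phi)=\max_i\mathrm{Lip}(\phi_i)$, $\zeta=4(\|\gamma\|_\infty+\mathrm{Lip}(\gamma))(\|\phi\|_\infty+\mathrm{Lip}(\phi))$, and $p_i(s)=(\phi_i(s),\gamma_i(s),s+2\gamma_i(s)\phi_i(s))$ for $s\in\bar I$, $i=1,2$. *)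

theory Defs
  imports "HOL-Analysis.Analysis"
begin

definition HX :: "real \<times> real \<times> real \<Rightarrow> real \<times> real \<times> real" where
  "HX p = (case p of (x, y, t) \<Rightarrow> (1, 0, 2 * y))"

definition HY :: "real \<times> real \<times> real \<Rightarrow> real \<times> real \<times> real" where
  "HY p = (case p of (x, y, t) \<Rightarrow> (0, 1, -2 * x))"

definition Hplane :: "real \<times> real \<times> real \<Rightarrow> (real \<times> real \<times> real) set" where
  "Hplane p = span {HX p, HY p}"

definition Lipc :: "real set \<Rightarrow> (real \<Rightarrow> real) \<Rightarrow> real" where
  "Lipc S f = Inf {L. L-lipschitz_on S f}"

definition supn :: "real set \<Rightarrow> (real \<Rightarrow> real) \<Rightarrow> real" where
  "supn S f = Sup ((\<lambda>s. \<bar>f s\<bar>) ` S)"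

definition phii :: "(real \<times> real \<Rightarrow> real) \<Rightarrow> (real \<Rightarrow> real) \<Rightarrow> real \<Rightarrow> real" where
  "phii \<phi> \<gamma> s = \<phi> (\<gamma> s, s)"

definition zeta :: "real \<Rightarrow> (real \<Rightarrow> real) \<Rightarrow> (real \<Rightarrow> real) \<Rightarrow> (real \<times> real \<Rightarrow> real) \<Rightarrow> real" where
  "zeta tbar \<gamma>1 \<gamma>2 \<phi> =
     4 * (max (supn {0<..<tbar} \<gamma>1) (supn {0<..<tbar} \<gamma>2)
          + max (Lipc {0<..<tbar} \<gamma>1) (Lipc {0<..<tbar} \<gamma>2))
       * (max (supn {0<..<tbar} (phii \<phi> \<gamma>1)) (supn {0<..<tbar} (phii \<phi> \<gamma>2))
          + max (Lipc {0<..<tbar} (phii \<phi> \<gamma>1)) (Lipc {0<..<tbar} (phii \<phi> \<gamma>2)))"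

definition pcurve :: "(real \<times> real \<Rightarrow> real) \<Rightarrow> (real \<Rightarrow> real) \<Rightarrow> real \<Rightarrow> real \<times> real \<times> real" where
  "pcurve \<phi> \<gamma> s = (phii \<phi> \<gamma> s, \<gamma> s, s + 2 * \<gamma> s * phii \<phi> \<gamma> s)"

end

theory Submission
  imports Defs
begin


lemma lipc_valid:
  assumes "\<exists>L. L-lipschitz_on S f"
  shows "(Lipc S f)-lipschitz_on S f"
proof -
  let ?A = "{L. L-lipschitz_on S f}"
  have ne: "?A \<noteq> {}" using assms by auto
  have bdd: "bdd_below ?A" by (rule bdd_belowI[of _ 0]) (auto dest: lipschitz_on_nonneg)
  have nn: "0 \<le> Lipc S f" unfolding Lipc_def by (rule cInf_greatest[OF ne]) (auto dest: lipschitz_on_nonneg)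
  show ?thesis
  proof (rule lipschitz_onI)
    fix x y assume xy: "x \<in> S" "y \<in> S"
    show "dist (f x) (f y) \<le> Lipc S f * dist x y"
    proof (cases "x = y")
      case True then show ?thesis by simp
    next
      case False
      then have d: "dist x y > 0" by simp
      have "dist (f x) (f y) / dist x y \<le> Lipc S f" unfolding Lipc_def
      proof (rule cInf_greatest[OF ne])
        fix L assume "L \<in> ?A"
        then have "dist (f x) (f y) \<le> L * dist x y" using xy by (auto dest: lipschitz_onD)
        then show "dist (f x) (f y) / dist x y \<le> L" using d by (simp add: divide_le_eq)
      qed
      then show ?thesis using d by (simp add: divide_le_eq)
    qed
  qed (rule nn)
qed

lemma lipc_le:
  assumes "L-lipschitz_on S f" shows "Lipc S f \<le> L"
  unfolding Lipc_def
  by (rule cInf_lower) (use assms in \<open>auto intro!: bdd_belowI[of _ 0] dest: lipschitz_on_nonneg\<close>)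

lemma lipc_ge:
  assumes "\<exists>L. L-lipschitz_on S f" "\<And>L. L-lipschitz_on S f \<Longrightarrow> M \<le> L"
  shows "M \<le> Lipc S f"
  unfolding Lipc_def
  by (rule cInf_greatest) (use assms in auto)

lemma ext_le:
  fixes g :: "real \<Rightarrow> real"
  assumes "t > 0" "continuous_on {0..t} g" "\<And>x. x \<in> {0<..<t} \<Longrightarrow> g x \<le> M" "x \<in> {0..t}"
  shows "g x \<le> M"
  using continuous_le_on_closure[of "{0<..<t}" g x M] assms by simp

lemma lip_ext:
  fixes f :: "real \<Rightarrow> real"
  assumes t: "t > 0" and c: "continuous_on {0..t} f" and L: "L-lipschitz_on {0<..<t} f"
  shows "L-lipschitz_on {0..t} f"
proof (rule lipschitz_onI)
  show "0 \<le> L" using L by (rule lipschitz_on_nonneg)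
  fix x y assume x: "x \<in> {0..t}" and y: "y \<in> {0..t}"
  have 1: "\<bar>f x - f y\<bar> - L * \<bar>x - y\<bar> \<le> 0" if "y \<in> {0<..<t}" for y
  proof (rule ext_le[OF t _ _ x, where g = "\<lambda>x. \<bar>f x - f y\<bar> - L * \<bar>x - y\<bar>"])
    show "continuous_on {0..t} (\<lambda>x. \<bar>f x - f y\<bar> - L * \<bar>x - y\<bar>)"
      by (intro continuous_intros c)
    fix x assume "x \<in> {0<..<t}"
    then show "\<bar>f x - f y\<bar> - L * \<bar>x - y\<bar> \<le> 0" using L that
      by (auto dest!: lipschitz_onD[of L _ f x y] simp: dist_real_def)
  qed
  have "\<bar>f x - f y\<bar> - L * \<bar>x - y\<bar> \<le> 0"
  proof (rule ext_le[OF t _ _ y, where g = "\<lambda>y. \<bar>f x - f y\<bar> - L * \<bar>x - y\<bar>"])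
    show "continuous_on {0..t} (\<lambda>y. \<bar>f x - f y\<bar> - L * \<bar>x - y\<bar>)"
      by (intro continuous_intros c)
  qed (rule 1)
  then show "dist (f x) (f y) \<le> L * dist x y" by (simp add: dist_real_def)
qed

lemma sup_ext:
  fixes f :: "real \<Rightarrow> real"
  assumes t: "t > 0" and c: "continuous_on {0..t} f" and L: "L-lipschitz_on {0<..<t} f"
    and x: "x \<in> {0..t}"
  shows "\<bar>f x\<bar> \<le> supn {0<..<t} f"
proof -
  have m: "t/2 \<in> {0<..<t}" using t by simp
  have bdd: "bdd_above ((\<lambda>s. \<bar>f s\<bar>) ` {0<..<t})"
  proof (rule bdd_aboveI2)
    fix s assume s: "s \<in> {0<..<t}"
    have "\<bar>f s - f (t/2)\<bar> \<le> L * \<bar>s - t/2\<bar>" using lipschitz_onD[OF L s m] by (simp add: dist_real_def)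
    moreover have "L * \<bar>s - t/2\<bar> \<le> L * t" using s lipschitz_on_nonneg[OF L]
      by (intro mult_left_mono) auto
    ultimately show "\<bar>f s\<bar> \<le> \<bar>f (t/2)\<bar> + L * t" by linarith
  qed
  show ?thesis
    by (rule ext_le[OF t _ _ x]) (auto intro!: continuous_intros c cSUP_upper bdd simp: supn_def)
qed

lemma Hplane_iff:
  "v \<in> Hplane (x, y, z) \<longleftrightarrow> snd (snd v) = 2 * y * fst v - 2 * x * fst (snd v)"
proof -
  obtain a b c where v: "v = (a, b, c)" by (cases v) auto
  have "v \<in> Hplane (x, y, z) \<longleftrightarrow> (\<exists>k m. v - k *\<^sub>R (1, 0, 2*y) = m *\<^sub>R (0, 1, -2*x))"
    unfolding Hplane_def HX_def HY_def by (auto simp: span_insert span_singleton)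
  also have "\<dots> \<longleftrightarrow> c = 2 * y * a - 2 * x * b"
    unfolding v by (auto simp: algebra_simps)
  finally show ?thesis using v by simp
qed



lemma prod_bound:
  fixes u u' v v' Sg Lg Sp Lp D :: real
  assumes "\<bar>u' - u\<bar> \<le> Lg * D" "\<bar>v' - v\<bar> \<le> Lp * D" "\<bar>u\<bar> \<le> 2 * Sg" "\<bar>v'\<bar> \<le> 2 * Sp"
    "0 \<le> Sg" "0 \<le> Lg" "0 \<le> Sp" "0 \<le> Lp" "0 \<le> D"
  shows "\<bar>2 * u' * v' - 2 * u * v\<bar> \<le> 4 * (Sg + Lg) * (Sp + Lp) * D"
proof -
  have e: "2 * u' * v' - 2 * u * v = 2 * ((u' - u) * v') + 2 * (u * (v' - v))" by (simp add: algebra_simps)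
  have 1: "\<bar>(u' - u) * v'\<bar> \<le> (Lg * D) * (2 * Sp)"
    unfolding abs_mult by (rule mult_mono) (use assms in auto)
  have 2: "\<bar>u * (v' - v)\<bar> \<le> (2 * Sg) * (Lp * D)"
    unfolding abs_mult by (rule mult_mono) (use assms in auto)
  have 3: "0 \<le> Sg * Sp * D + Lg * Lp * D" using assms by simp
  have "\<bar>2 * u' * v' - 2 * u * v\<bar> \<le> 2 * ((Lg * D) * (2 * Sp)) + 2 * ((2 * Sg) * (Lp * D))"
    unfolding e using 1 2 by linarith
  also have "\<dots> \<le> 4 * (Sg + Lg) * (Sp + Lp) * D" using 3 by (simp add: algebra_simps)
  finally show ?thesis .
qed

lemma rel_bounds:
  fixes a b z :: real
  assumes h: "\<bar>a - b\<bar> \<le> z * (\<bar>a\<bar> + \<bar>b\<bar>)" and z: "0 \<le> z" "z < 1"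
  shows "(b > 0 \<longrightarrow> a > 0) \<and> (b = 0 \<longrightarrow> a = 0) \<and> (1 - z) * \<bar>a\<bar> \<le> (1 + z) * \<bar>b\<bar>
     \<and> (1 - z) * \<bar>b\<bar> \<le> (1 + z) * \<bar>a\<bar>"
proof -
  have t1: "\<bar>a\<bar> - \<bar>b\<bar> \<le> z * (\<bar>a\<bar> + \<bar>b\<bar>)" "\<bar>b\<bar> - \<bar>a\<bar> \<le> z * (\<bar>a\<bar> + \<bar>b\<bar>)" using h by linarith+
  have A: "(1 - z) * \<bar>a\<bar> \<le> (1 + z) * \<bar>b\<bar>" using t1(1) by (simp add: algebra_simps)
  have B: "(1 - z) * \<bar>b\<bar> \<le> (1 + z) * \<bar>a\<bar>" using t1(2) by (simp add: algebra_simps)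
  have C: "a > 0" if "b > 0"
  proof (rule ccontr)
    assume "\<not> a > 0"
    then have "\<bar>a - b\<bar> = \<bar>a\<bar> + \<bar>b\<bar>" using that by auto
    then have "(1 - z) * (\<bar>a\<bar> + \<bar>b\<bar>) \<le> 0" using h by (simp add: algebra_simps)
    moreover have "(1 - z) * (\<bar>a\<bar> + \<bar>b\<bar>) > 0" using that z by (intro mult_pos_pos) auto
    ultimately show False by simp
  qed
  have D: "a = 0" if "b = 0"
  proof -
    have "(1 - z) * \<bar>a\<bar> \<le> 0" using A that by simp
    moreover have "(1 - z) * \<bar>a\<bar> \<ge> 0" using z by simp
    ultimately have "(1 - z) * \<bar>a\<bar> = 0" by simp
    then show ?thesis using z by simp
  qed
  show ?thesis using A B C D by blast
qed


lemma frontier_pts: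
  fixes tbar :: real and \<gamma>1 \<gamma>2 :: "real \<Rightarrow> real"
  assumes t: "tbar > 0"
    and g_sign: "\<forall>s\<in>{0<..<tbar}. \<gamma>1 s < 0 \<and> 0 < \<gamma>2 s"
    and g_ends: "\<gamma>1 0 = 0" "\<gamma>1 tbar = 0" "\<gamma>2 0 = 0" "\<gamma>2 tbar = 0"
    and D_def: "D = {(y, t). t \<in> {0<..<tbar} \<and> \<gamma>1 t < y \<and> y < \<gamma>2 t}"
    and s: "s \<in> {0..tbar}"
  shows "(\<gamma>1 s, s) \<in> frontier D \<and> (\<gamma>2 s, s) \<in> frontier D"
proof -
  have nD: "(\<gamma>1 s, s) \<notin> D" "(\<gamma>2 s, s) \<notin> D"
    unfolding D_def using s g_ends by auto
  have ni: "(\<gamma>1 s, s) \<notin> interior D" "(\<gamma>2 s, s) \<notin> interior D"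
    using nD interior_subset by blast+
  have cl: "(\<gamma>1 s, s) \<in> closure D \<and> (\<gamma>2 s, s) \<in> closure D"
  proof (cases "s \<in> {0<..<tbar}")
    case True
    have gs: "\<gamma>1 s < \<gamma>2 s" using g_sign True by force
    show ?thesis unfolding closure_approachable
    proof (intro conjI allI impI)
      fix e :: real assume e: "e > 0"
      let ?d = "min (e/2) ((\<gamma>2 s - \<gamma>1 s)/2)"
      have "(\<gamma>1 s + ?d, s) \<in> D" using True gs e unfolding D_def by (auto simp: min_def field_simps)
      moreover have "dist (\<gamma>1 s + ?d, s) (\<gamma>1 s, s) < e" using e gs by (simp add: dist_Pair_Pair dist_real_def)
      ultimately show "\<exists>y\<in>D. dist y (\<gamma>1 s, s) < e" by blast
    next
      fix e :: real assume e: "e > 0"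
      let ?d = "min (e/2) ((\<gamma>2 s - \<gamma>1 s)/2)"
      have "(\<gamma>2 s - ?d, s) \<in> D" using True gs e unfolding D_def by (auto simp: min_def field_simps)
      moreover have "dist (\<gamma>2 s - ?d, s) (\<gamma>2 s, s) < e" using e gs by (simp add: dist_Pair_Pair dist_real_def)
      ultimately show "\<exists>y\<in>D. dist y (\<gamma>2 s, s) < e" by blast
    qed
  next
    case False
    then have s': "s = 0 \<or> s = tbar" using s by auto
    have "(0, s) \<in> closure D" unfolding closure_approachable
    proof (intro allI impI)
      fix e :: real assume e: "e > 0"
      let ?d = "min (e/2) (tbar/2)"
      let ?y = "if s = 0 then (0::real, ?d) else (0, tbar - ?d)"
      have "?y \<in> D" using s' t e g_sign unfolding D_def by auto
      moreover have "dist ?y (0, s) < e" using e t s' by (auto simp: dist_Pair_Pair dist_real_def)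
      ultimately show "\<exists>y\<in>D. dist y (0, s) < e" by blast
    qed
    then show ?thesis using s' g_ends by auto
  qed
  show ?thesis using ni cl unfolding frontier_def by auto
qed



theorem theorem2p1:
  fixes tbar :: real
    and \<gamma>1 \<gamma>2 :: "real \<Rightarrow> real"
    and \<phi> :: "real \<times> real \<Rightarrow> real"
    and D :: "(real \<times> real) set"
  assumes tbar_pos: "tbar > 0"
    and g1_lip: "\<exists>L. L-lipschitz_on {0<..<tbar} \<gamma>1"
    and g2_lip: "\<exists>L. L-lipschitz_on {0<..<tbar} \<gamma>2"
    and g1_cont: "continuous_on {0..tbar} \<gamma>1"
    and g2_cont: "continuous_on {0..tbar} \<gamma>2"
    and g_sign: "\<forall>s\<in>{0<..<tbar}. \<gamma>1 s < 0 \<and> 0 < \<gamma>2 s"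
    and g_ends: "\<gamma>1 0 = 0" "\<gamma>1 tbar = 0" "\<gamma>2 0 = 0" "\<gamma>2 tbar = 0"
    and D_def: "D = {(y, t). t \<in> {0<..<tbar} \<and> \<gamma>1 t < y \<and> y < \<gamma>2 t}"
    and phi_cont: "continuous_on (frontier D) \<phi>"
    and phi1_lip: "\<exists>L. L-lipschitz_on {0<..<tbar} (phii \<phi> \<gamma>1)"
    and phi2_lip: "\<exists>L. L-lipschitz_on {0<..<tbar} (phii \<phi> \<gamma>2)"
    and zeta_lt: "zeta tbar \<gamma>1 \<gamma>2 \<phi> < 1"
  shows "\<exists>lam :: real \<Rightarrow> real.
              strict_mono_on {0..tbar} lam \<and> lam ` {0..tbar} = {0..tbar}
            \<and> (\<exists>L. L-lipschitz_on {0..tbar} lam)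
            \<and> (\<exists>L. L-lipschitz_on {0..tbar} (the_inv_into {0..tbar} lam))
            \<and> (\<forall>s\<in>{0..tbar}. pcurve \<phi> \<gamma>2 (lam s) - pcurve \<phi> \<gamma>1 s \<in> Hplane (pcurve \<phi> \<gamma>1 s))
            \<and> (\<forall>s\<in>{0..tbar}. \<forall>l\<in>{0..tbar}.
                 pcurve \<phi> \<gamma>2 l - pcurve \<phi> \<gamma>1 s \<in> Hplane (pcurve \<phi> \<gamma>1 s) \<longrightarrow> l = lam s)
            \<and> lam 0 = 0 \<and> lam tbar = tbar
            \<and> (1 - zeta tbar \<gamma>1 \<gamma>2 \<phi>) / (1 + zeta tbar \<gamma>1 \<gamma>2 \<phi>) \<le> Lipc {0..tbar} lam
            \<and> Lipc {0..tbar} lam \<le> (1 + zeta tbar \<gamma>1 \<gamma>2 \<phi>) / (1 - zeta tbar \<gamma>1 \<gamma>2 \<phi>)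
            \<and> (1 - zeta tbar \<gamma>1 \<gamma>2 \<phi>) / (1 + zeta tbar \<gamma>1 \<gamma>2 \<phi>)
                 \<le> Lipc {0..tbar} (the_inv_into {0..tbar} lam)
            \<and> Lipc {0..tbar} (the_inv_into {0..tbar} lam)
                 \<le> (1 + zeta tbar \<gamma>1 \<gamma>2 \<phi>) / (1 - zeta tbar \<gamma>1 \<gamma>2 \<phi>)"
proof -
  define T where "T = {0..tbar}"
  define p1 where "p1 = phii \<phi> \<gamma>1"
  define p2 where "p2 = phii \<phi> \<gamma>2"
  define z where "z = zeta tbar \<gamma>1 \<gamma>2 \<phi>"
  have fr: "(\<gamma>1 s, s) \<in> frontier D \<and> (\<gamma>2 s, s) \<in> frontier D" if "s \<in> T" for s
    using frontier_pts[OF tbar_pos g_sign g_ends D_def] that T_def by blast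
  have p1c: "continuous_on T p1" unfolding p1_def phii_def
    by (rule continuous_on_compose2[OF phi_cont, of T "\<lambda>s. (\<gamma>1 s, s)"])
       (use fr g1_cont T_def in \<open>auto intro!: continuous_intros\<close>)
  have p2c: "continuous_on T p2" unfolding p2_def phii_def
    by (rule continuous_on_compose2[OF phi_cont, of T "\<lambda>s. (\<gamma>2 s, s)"])
       (use fr g2_cont T_def in \<open>auto intro!: continuous_intros\<close>)
  define Sg where "Sg = max (supn {0<..<tbar} \<gamma>1) (supn {0<..<tbar} \<gamma>2)"
  define Lg where "Lg = max (Lipc {0<..<tbar} \<gamma>1) (Lipc {0<..<tbar} \<gamma>2)"
  define Sp where "Sp = max (supn {0<..<tbar} p1) (supn {0<..<tbar} p2)"
  define Lp where "Lp = max (Lipc {0<..<tbar} p1) (Lipc {0<..<tbar} p2)"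
  have zdef: "z = 4 * (Sg + Lg) * (Sp + Lp)"
    unfolding z_def zeta_def Sg_def Lg_def Sp_def Lp_def p1_def p2_def ..
  have lg1: "(Lipc {0<..<tbar} \<gamma>1)-lipschitz_on T \<gamma>1"
    unfolding T_def by (rule lip_ext[OF tbar_pos g1_cont lipc_valid[OF g1_lip]])
  have lg2: "(Lipc {0<..<tbar} \<gamma>2)-lipschitz_on T \<gamma>2"
    unfolding T_def by (rule lip_ext[OF tbar_pos g2_cont lipc_valid[OF g2_lip]])
  have lp1: "(Lipc {0<..<tbar} p1)-lipschitz_on T p1"
    unfolding T_def by (rule lip_ext[OF tbar_pos p1c[unfolded T_def] lipc_valid[OF phi1_lip[folded p1_def]]])
  have lp2: "(Lipc {0<..<tbar} p2)-lipschitz_on T p2"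
    unfolding T_def by (rule lip_ext[OF tbar_pos p2c[unfolded T_def] lipc_valid[OF phi2_lip[folded p2_def]]])
  have LG: "\<bar>\<gamma>1 x - \<gamma>1 y\<bar> \<le> Lg * \<bar>x - y\<bar> \<and> \<bar>\<gamma>2 x - \<gamma>2 y\<bar> \<le> Lg * \<bar>x - y\<bar>"
    if "x \<in> T" "y \<in> T" for x y
  proof -
    have "\<bar>\<gamma>1 x - \<gamma>1 y\<bar> \<le> Lipc {0<..<tbar} \<gamma>1 * \<bar>x - y\<bar>"
      using lipschitz_onD[OF lg1 that] by (simp add: dist_real_def)
    moreover have "\<bar>\<gamma>2 x - \<gamma>2 y\<bar> \<le> Lipc {0<..<tbar} \<gamma>2 * \<bar>x - y\<bar>"
      using lipschitz_onD[OF lg2 that] by (simp add: dist_real_def)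
    moreover have "Lipc {0<..<tbar} \<gamma>1 * \<bar>x - y\<bar> \<le> Lg * \<bar>x - y\<bar>"
      "Lipc {0<..<tbar} \<gamma>2 * \<bar>x - y\<bar> \<le> Lg * \<bar>x - y\<bar>"
      unfolding Lg_def by (auto intro!: mult_right_mono)
    ultimately show ?thesis by linarith
  qed
  have LP: "\<bar>p1 x - p1 y\<bar> \<le> Lp * \<bar>x - y\<bar> \<and> \<bar>p2 x - p2 y\<bar> \<le> Lp * \<bar>x - y\<bar>"
    if "x \<in> T" "y \<in> T" for x y
  proof -
    have "\<bar>p1 x - p1 y\<bar> \<le> Lipc {0<..<tbar} p1 * \<bar>x - y\<bar>"
      using lipschitz_onD[OF lp1 that] by (simp add: dist_real_def)
    moreover have "\<bar>p2 x - p2 y\<bar> \<le> Lipc {0<..<tbar} p2 * \<bar>x - y\<bar>"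
      using lipschitz_onD[OF lp2 that] by (simp add: dist_real_def)
    moreover have "Lipc {0<..<tbar} p1 * \<bar>x - y\<bar> \<le> Lp * \<bar>x - y\<bar>"
      "Lipc {0<..<tbar} p2 * \<bar>x - y\<bar> \<le> Lp * \<bar>x - y\<bar>"
      unfolding Lp_def by (auto intro!: mult_right_mono)
    ultimately show ?thesis by linarith
  qed
  have SG: "\<bar>\<gamma>1 x\<bar> \<le> Sg \<and> \<bar>\<gamma>2 x\<bar> \<le> Sg" if "x \<in> T" for x
  proof -
    obtain L1 where L1: "L1-lipschitz_on {0<..<tbar} \<gamma>1" using g1_lip by blast
    obtain L2 where L2: "L2-lipschitz_on {0<..<tbar} \<gamma>2" using g2_lip by blast
    show ?thesis using sup_ext[OF tbar_pos g1_cont L1, of x] sup_ext[OF tbar_pos g2_cont L2, of x] that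
      unfolding Sg_def T_def by auto
  qed
  have SP: "\<bar>p1 x\<bar> \<le> Sp \<and> \<bar>p2 x\<bar> \<le> Sp" if "x \<in> T" for x
  proof -
    obtain L1 where L1: "L1-lipschitz_on {0<..<tbar} p1" using phi1_lip p1_def by blast
    obtain L2 where L2: "L2-lipschitz_on {0<..<tbar} p2" using phi2_lip p2_def by blast
    show ?thesis using sup_ext[OF tbar_pos p1c[unfolded T_def] L1, of x] sup_ext[OF tbar_pos p2c[unfolded T_def] L2, of x] that
      unfolding Sp_def T_def by auto
  qed
  have T0: "0 \<in> T" and Tt: "tbar \<in> T" using tbar_pos T_def by auto
  have Sg0: "0 \<le> Sg" using SG[OF T0] by linarith
  have Sp0: "0 \<le> Sp" using SP[OF T0] by linarith
  have Lg0: "0 \<le> Lg" using lipschitz_on_nonneg[OF lg1] unfolding Lg_def by linarith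
  have Lp0: "0 \<le> Lp" using lipschitz_on_nonneg[OF lp1] unfolding Lp_def by linarith
  have z0: "0 \<le> z" unfolding zdef using Sg0 Sp0 Lg0 Lp0 by simp
  have z1: "z < 1" using zeta_lt z_def by simp
  define Q where "Q s l = 2 * (\<gamma>2 l - \<gamma>1 s) * (p2 l + p1 s)" for s l
  define F where "F s l = l - s + Q s l" for s l
  have KQ: "\<bar>Q s' l' - Q s l\<bar> \<le> z * (\<bar>l' - l\<bar> + \<bar>s' - s\<bar>)"
    if "s \<in> T" "s' \<in> T" "l \<in> T" "l' \<in> T" for s s' l l'
  proof -
    have "\<bar>(\<gamma>2 l' - \<gamma>1 s') - (\<gamma>2 l - \<gamma>1 s)\<bar> \<le> Lg * (\<bar>l' - l\<bar> + \<bar>s' - s\<bar>)"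
      using LG[of l' l] LG[of s' s] that by (simp add: algebra_simps) linarith
    moreover have "\<bar>(p2 l' + p1 s') - (p2 l + p1 s)\<bar> \<le> Lp * (\<bar>l' - l\<bar> + \<bar>s' - s\<bar>)"
      using LP[of l' l] LP[of s' s] that by (simp add: algebra_simps) linarith
    moreover have "\<bar>\<gamma>2 l - \<gamma>1 s\<bar> \<le> 2 * Sg"
      using SG[OF that(3)] SG[OF that(1)] abs_triangle_ineq4[of "\<gamma>2 l" "\<gamma>1 s"] by linarith
    moreover have "\<bar>p2 l' + p1 s'\<bar> \<le> 2 * Sp"
      using SP[OF that(4)] SP[OF that(2)] abs_triangle_ineq[of "p2 l'" "p1 s'"] by linarith
    ultimately show ?thesis unfolding Q_def zdef
      by (intro prod_bound) (use Sg0 Sp0 Lg0 Lp0 in auto)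
  qed
  have REL: "(s' - s > 0 \<longrightarrow> l' - l > 0) \<and> (s' - s = 0 \<longrightarrow> l' - l = 0)
      \<and> (1 - z) * \<bar>l' - l\<bar> \<le> (1 + z) * \<bar>s' - s\<bar> \<and> (1 - z) * \<bar>s' - s\<bar> \<le> (1 + z) * \<bar>l' - l\<bar>"
    if "s \<in> T" "s' \<in> T" "l \<in> T" "l' \<in> T" "F s l = 0" "F s' l' = 0" for s s' l l'
  proof (rule rel_bounds[OF _ z0 z1])
    have "(l' - l) - (s' - s) = - (Q s' l' - Q s l)" using that(5,6) unfolding F_def by linarith
    then show "\<bar>(l' - l) - (s' - s)\<bar> \<le> z * (\<bar>l' - l\<bar> + \<bar>s' - s\<bar>)" using KQ[OF that(1-4)] by simp
  qed
  have Q00: "Q 0 0 = 0" and Qtt: "Q tbar tbar = 0" unfolding Q_def using g_ends by auto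
  have EX: "\<exists>l\<in>T. F s l = 0" if s: "s \<in> T" for s
  proof -
    have s0: "0 \<le> s" "s \<le> tbar" using s T_def by auto
    have "F s 0 \<le> 0"
    proof -
      have "\<bar>Q s 0 - Q 0 0\<bar> \<le> z * s" using KQ[OF T0 s T0 T0] s0 by simp
      moreover have "z * s \<le> 1 * s" using z1 s0 by (intro mult_right_mono) auto
      ultimately show ?thesis unfolding F_def using Q00 by simp
    qed
    moreover have "F s tbar \<ge> 0"
    proof -
      have "\<bar>Q s tbar - Q tbar tbar\<bar> \<le> z * (tbar - s)" using KQ[OF Tt s Tt Tt] s0 by simp
      moreover have "z * (tbar - s) \<le> 1 * (tbar - s)" using z1 s0 by (intro mult_right_mono) auto
      ultimately show ?thesis unfolding F_def using Qtt by simp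
    qed
    moreover have "continuous_on {0..tbar} (F s)" unfolding F_def Q_def
      using g2_cont p2c T_def by (auto intro!: continuous_intros)
    ultimately obtain l where "0 \<le> l" "l \<le> tbar" "F s l = 0"
      using IVT'[of "F s" 0 0 tbar] tbar_pos by auto
    then show ?thesis unfolding T_def by auto
  qed
  define lam where "lam s = (THE l. l \<in> T \<and> F s l = 0)" for s
  have UNI: "l = l'" if "s \<in> T" "l \<in> T" "l' \<in> T" "F s l = 0" "F s l' = 0" for s l l'
    using REL[of s s l l'] that by simp
  have LAM: "lam s \<in> T \<and> F s (lam s) = 0" if "s \<in> T" for s
  proof -
    have "\<exists>!l. l \<in> T \<and> F s l = 0" using EX[OF that] UNI[OF that] by blast
    then show ?thesis unfolding lam_def by (rule theI')
  qed
  have UNI2: "l = lam s" if "s \<in> T" "l \<in> T" "F s l = 0" for s l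
    using UNI[of s l "lam s"] LAM[of s] that by blast
  have HP: "pcurve \<phi> \<gamma>2 l - pcurve \<phi> \<gamma>1 s \<in> Hplane (pcurve \<phi> \<gamma>1 s) \<longleftrightarrow> F s l = 0" for s l
    unfolding pcurve_def Hplane_iff F_def Q_def p1_def p2_def
    by (simp add: algebra_simps)
  have lam0: "lam 0 = 0" using UNI2[OF T0 T0] Q00 unfolding F_def by simp
  have lamt: "lam tbar = tbar" using UNI2[OF Tt Tt] Qtt unfolding F_def by simp
  define K where "K = (1 + z) / (1 - z)"
  define r where "r = (1 - z) / (1 + z)"
  have K0: "0 \<le> K" unfolding K_def using z0 z1 by simp
  have r1: "r \<le> 1" unfolding r_def using z0 z1 by simp
  have lamlip: "K-lipschitz_on T lam"
  proof (rule lipschitz_onI[OF _ K0])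
    fix x y assume xy: "x \<in> T" "y \<in> T"
    have "(1 - z) * \<bar>lam y - lam x\<bar> \<le> (1 + z) * \<bar>y - x\<bar>"
      using REL[of x y "lam x" "lam y"] LAM xy by blast
    then have "\<bar>lam y - lam x\<bar> \<le> K * \<bar>y - x\<bar>" unfolding K_def using z1
      by (simp add: pos_le_divide_eq mult.commute)
    then show "dist (lam x) (lam y) \<le> K * dist x y" by (simp add: dist_real_def abs_minus_commute)
  qed
  have smono: "strict_mono_on T lam"
  proof (rule strict_mono_onI)
    fix x y assume "x \<in> T" "y \<in> T" "x < y"
    then show "lam x < lam y" using REL[of x y "lam x" "lam y"] LAM by auto
  qed
  have img: "lam ` T = T"
  proof
    show "lam ` T \<subseteq> T" using LAM by auto
    show "T \<subseteq> lam ` T"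
    proof
      fix y assume "y \<in> T"
      then have "lam 0 \<le> y" "y \<le> lam tbar" using lam0 lamt T_def by auto
      moreover have "continuous_on {0..tbar} lam" using lipschitz_on_continuous_on[OF lamlip] T_def by simp
      ultimately obtain x where "0 \<le> x" "x \<le> tbar" "lam x = y" using IVT'[of lam 0 y tbar] tbar_pos by auto
      then show "y \<in> lam ` T" unfolding T_def by auto
    qed
  qed
  have inj: "inj_on lam T" using smono strict_mono_on_imp_inj_on by blast
  define iv where "iv = the_inv_into T lam"
  have ivf: "iv (lam x) = x" if "x \<in> T" for x using the_inv_into_f_f[OF inj that] iv_def by simp
  have iv0: "iv 0 = 0" using ivf[OF T0] lam0 by simp
  have ivt: "iv tbar = tbar" using ivf[OF Tt] lamt by simp
  have ivlip: "K-lipschitz_on T iv"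
  proof (rule lipschitz_onI[OF _ K0])
    fix x' y' assume xy': "x' \<in> T" "y' \<in> T"
    have "x' \<in> lam ` T" "y' \<in> lam ` T" using xy' img by auto
    then obtain x y where xy: "x \<in> T" "y \<in> T" "x' = lam x" "y' = lam y" by (auto simp: image_iff)
    have "(1 - z) * \<bar>y - x\<bar> \<le> (1 + z) * \<bar>lam y - lam x\<bar>"
      using REL[of x y "lam x" "lam y"] LAM xy by blast
    then have "\<bar>y - x\<bar> \<le> K * \<bar>lam y - lam x\<bar>" unfolding K_def using z1
      by (simp add: pos_le_divide_eq mult.commute)
    moreover have "iv x' = x" "iv y' = y" using xy ivf by auto
    ultimately show "dist (iv x') (iv y') \<le> K * dist x' y'" using xy
      by (simp add: dist_real_def abs_minus_commute)
  qed
  have lowb: "r \<le> L" if "L-lipschitz_on T f" "f 0 = 0" "f tbar = tbar" for L f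
  proof -
    have "tbar \<le> L * tbar" using lipschitz_onD[OF that(1) Tt T0] that(2,3) tbar_pos by (simp add: dist_real_def)
    then have "1 \<le> L" using tbar_pos by simp
    then show ?thesis using r1 by linarith
  qed
  have A1: "r \<le> Lipc T lam" by (rule lipc_ge) (use lamlip lowb lam0 lamt in auto)
  have A2: "Lipc T lam \<le> K" by (rule lipc_le[OF lamlip])
  have A3: "r \<le> Lipc T iv" by (rule lipc_ge) (use ivlip lowb iv0 ivt in auto)
  have A4: "Lipc T iv \<le> K" by (rule lipc_le[OF ivlip])
  show ?thesis
    apply (rule exI[of _ lam])
    using smono img lamlip ivlip HP LAM UNI2 lam0 lamt A1 A2 A3 A4
    unfolding T_def[symmetric] z_def[symmetric] iv_def[symmetric] K_def[symmetric] r_def[symmetric]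
    by blast
qed


end
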